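(* Let $\Phi:[0,\infty)\to[0,\infty)$ be convex and non-decreasing and let $(\mu_n)$ be a sequence of reals. Assume that, in the setting described in the context, assumptions (A1), (A2), (A3) and (A4) hold, that the function $c(v)$ in (A4) is a constant $c>0$ not depending on $v$, and that $\varphi(n):=\sup_{v\in\mathcal V_n}\varphi_v(n)\to0$ as $n\to\infty$. If, in addition, there exists $b_o>0$ such that $P(V\in\mathcal V_n)\ge b_o$ for all sufficiently large $n$, then for every constant $c_o\in(0,b_oc/8)$ and every sufficiently large $n$, $$E\,\Phi\big(|L(Z)-\mu_n|\big)\ \ge\ \Phi\Big(\frac{\epsilon_o c}{16\,\varphi(n)}\Big)\,c_o .$$
   Context: For each $n$, $Z$ is a random element of a finite set $\mathcal Z_n$ and $L:\mathcal Z_n\to\mathbb R$ is a function (a score). A random transformation $\mathcal R:\mathcal Z_n\to\mathcal Z_n$ is a random map whose randomness is independent of $Z$; for a function $g$, $E[g(\mathcal R(Z))\mid Z]$ denotes expectation over the randomness of $\mathcal R$ only. Let $\mathfrak u:\mathcal Z_n\to\mathbb Z$ and $\mathfrak v:\mathcal Z_n\to\mathbb Z^d$ be functions, $U:=\mathfrak u(Z)$, $V:=\mathfrak v(Z)$. Let $\mathcal S_n,\mathcal S_n^U,\mathcal S_n^V$ denote the supports of the laws of $(U,V)$, $U$, $V$ respectively, and for $v\in\mathcal S_n^V$ let $\mathcal S_n(v):=\{u\in\mathcal S_n^U:(u,v)\in\mathcal S_n\}$. For $(u,v)\in\mathcal S_n$ let $P_{(u,v)}$ be the law of $Z$ conditioned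 on $U=u,V=v$. A "universal constant" means one not depending on $n$. Assumptions: (A1) There exist a constant $\epsilon_o>0$ and a sequence $\Delta_n\to0$ such that $P\big(E[L(\mathcal R(Z))-L(Z)\mid Z]\ge\epsilon_o\big)\ge1-\Delta_n$. (A2) There is a constant $A<\infty$ with $L(\mathcal R(Z))-L(Z)\ge -A$ always. (A3) There exist sets $\mathcal V_n\subset\mathcal S_n^V$ and, for $v\in\mathcal V_n$, sets of consecutive integers $\mathcal U_n(v)=\{u_n(v)+1,\dots,u_n(v)+m_n(v)\}\subset\mathcal S_n(v)$ such that for every $v\in\mathcal V_n$ and $u\in\mathcal U_n(v)$: if $Z\sim P_{(u,v)}$ then $\mathcal R(Z)\sim P_{(u+1,v)}$. (A4) There exist $n_1>0$ and a function $c(v)>0$ (not depending on $n$) such that for every $n\ge n_1$ and every $v\in\mathcal V_n$, $m_n(v)\ge c(v)\varphi_v(n)^{-1}$, where $\varphi_v(n)>0$ satisfies $\min_{u\in\mathcal U_n(v)}P(U=u\mid V=v)\ge\varphi_v(n)$. *)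

theory Defs
  imports "HOL-Analysis.Analysis" "HOL-Probability.Probability"
begin

end

theory Submission imports Defs begin
lemma sum_shift_aux: "(\<Sum>j<k. f (i+j)) = (\<Sum>j\<in>{i..<i+k}. f j)" for f :: "nat\<Rightarrow>real"
  by (induction k) auto
lemma sum_double_aux: "(\<Sum>j<2*k. f j) = (\<Sum>i<k. f i) + (\<Sum>i<k. f (i+k::nat))" for f :: "nat\<Rightarrow>real"
proof -
  have "{..<2*k} = {..<k} \<union> {k..<k+k}" by auto
  hence "(\<Sum>j<2*k. f j) = (\<Sum>i<k. f i) + (\<Sum>j\<in>{k..<k+k}. f j)"
    by (simp add: sum.union_disjoint ivl_disj_int)
  also have "(\<Sum>j\<in>{k..<k+k}. f j) = (\<Sum>i<k. f (k+i))" by (simp add: sum_shift_aux)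
  finally show ?thesis by (simp add: add.commute)
qed

lemma pairs_lemma:
  fixes \<alpha> \<pi> \<beta> :: "nat \<Rightarrow> real" and \<Phi> :: "real \<Rightarrow> real"
  assumes km: "2*k \<le> m"
    and step: "\<forall>j<m. \<alpha> (Suc j) - \<alpha> j \<ge> eps - K * \<beta> j"
    and bnn: "\<forall>j<m. \<beta> j \<ge> 0" and K: "K \<ge> 0"
    and big: "real k * eps - K * (\<Sum>j<m. \<beta> j) \<ge> 2*T"
    and pq: "\<forall>j<m. \<pi> j \<ge> q" and q: "q \<ge> 0"
    and mono: "mono_on {0..} \<Phi>" and nn: "\<forall>x\<ge>0. \<Phi> x \<ge> 0" and T: "T \<ge> 0"
  shows "(\<Sum>j<m. \<pi> j * \<Phi> \<bar>\<alpha> j - \<mu>\<bar>) \<ge> real k * q * \<Phi> T"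
proof -
  let ?F = "\<lambda>j. \<pi> j * \<Phi> \<bar>\<alpha> j - \<mu>\<bar>"
  have Fnn: "?F j \<ge> 0" if "j < m" for j
    using pq q nn that by (metis abs_ge_zero mult_nonneg_nonneg order_trans)
  have pair: "?F i + ?F (i+k) \<ge> q * \<Phi> T" if i: "i < k" for i
  proof -
    have tel: "\<alpha> (i+k) - \<alpha> i = (\<Sum>j<k. \<alpha> (i + Suc j) - \<alpha> (i+j))"
      using sum_lessThan_telescope[of "\<lambda>j. \<alpha> (i+j)" k] by simp
    have "(\<Sum>j<k. \<alpha> (i + Suc j) - \<alpha> (i+j)) \<ge> (\<Sum>j<k. eps - K * \<beta> (i+j))"
      using step i km by (intro sum_mono) (auto)
    also have "(\<Sum>j<k. eps - K * \<beta> (i+j)) = real k * eps - K * (\<Sum>j<k. \<beta> (i+j))"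
      by (simp add: sum_subtractf sum_distrib_left)
    also have "(\<Sum>j<k. \<beta> (i+j)) \<le> (\<Sum>j<m. \<beta> j)"
    proof -
      have "(\<Sum>j<k. \<beta> (i+j)) = (\<Sum>j\<in>{i..<i+k}. \<beta> j)" by (rule sum_shift_aux)
      also have "\<dots> \<le> (\<Sum>j<m. \<beta> j)"
        using i km bnn by (intro sum_mono2) auto
      finally show ?thesis .
    qed
    hence "real k * eps - K * (\<Sum>j<k. \<beta> (i+j)) \<ge> real k * eps - K * (\<Sum>j<m. \<beta> j)"
      using K by (simp add: mult_left_mono)
    finally have "\<alpha> (i+k) - \<alpha> i \<ge> 2*T" using tel big by linarith
    hence "\<bar>\<alpha> i - \<mu>\<bar> \<ge> T \<or> \<bar>\<alpha> (i+k) - \<mu>\<bar> \<ge> T" by linarith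
    hence "\<Phi> \<bar>\<alpha> i - \<mu>\<bar> \<ge> \<Phi> T \<or> \<Phi> \<bar>\<alpha> (i+k) - \<mu>\<bar> \<ge> \<Phi> T"
      using mono T by (auto intro: mono_onD)
    hence s: "\<Phi> \<bar>\<alpha> i - \<mu>\<bar> + \<Phi> \<bar>\<alpha> (i+k) - \<mu>\<bar> \<ge> \<Phi> T"
      using nn by (smt (verit) abs_ge_zero)
    have "?F i + ?F (i+k) \<ge> q * \<Phi> \<bar>\<alpha> i - \<mu>\<bar> + q * \<Phi> \<bar>\<alpha> (i+k) - \<mu>\<bar>"
      using pq i km nn by (intro add_mono mult_right_mono) auto
    also have "q * \<Phi> \<bar>\<alpha> i - \<mu>\<bar> + q * \<Phi> \<bar>\<alpha> (i+k) - \<mu>\<bar> \<ge> q * \<Phi> T"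
      using s q by (simp add: distrib_left[symmetric] mult_left_mono)
    finally show ?thesis by linarith
  qed
  have "(\<Sum>j<m. ?F j) \<ge> (\<Sum>j<2*k. ?F j)"
    using km Fnn by (intro sum_mono2) auto
  also have "(\<Sum>j<2*k. ?F j) = (\<Sum>i<k. ?F i + ?F (i+k))"
    by (simp add: sum_double_aux sum.distrib)
  also have "(\<Sum>i<k. ?F i + ?F (i+k)) \<ge> (\<Sum>i<k. q * \<Phi> T)"
    using pair by (intro sum_mono) auto
  finally show ?thesis by simp
qed
lemma fiber_sum:
  fixes g :: "'z \<Rightarrow> real"
  assumes "finite I" "finite Z" "\<forall>z\<in>Z. g z \<ge> 0" "inj_on f I"
  shows "(\<Sum>i\<in>I. \<Sum>z\<in>{z\<in>Z. \<kappa> z = f i}. g z) \<le> (\<Sum>z\<in>Z. g z)"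
proof -
  have "(\<Sum>i\<in>I. \<Sum>z\<in>{z\<in>Z. \<kappa> z = f i}. g z) = sum g (\<Union>i\<in>I. {z\<in>Z. \<kappa> z = f i})"
    using assms by (subst sum.UNION_disjoint) (auto simp: inj_on_def)
  also have "\<dots> \<le> sum g Z" using assms by (intro sum_mono2) auto
  finally show ?thesis .
qed

lemma jensen_fin:
  fixes w L :: "'z \<Rightarrow> real" and \<Phi> :: "real \<Rightarrow> real"
  assumes S: "finite S" and w: "\<forall>z\<in>S. w z \<ge> 0" and W: "(\<Sum>z\<in>S. w z) > 0"
    and conv: "convex_on {0..} \<Phi>" and mono: "mono_on {0..} \<Phi>"
  shows "(\<Sum>z\<in>S. w z * \<Phi> \<bar>L z - \<mu>\<bar>) \<ge> (\<Sum>z\<in>S. w z) * \<Phi> \<bar>(\<Sum>z\<in>S. w z * L z) / (\<Sum>z\<in>S. w z) - \<mu>\<bar>"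
proof -
  define W where "W = (\<Sum>z\<in>S. w z)"
  have Wp: "W > 0" using W W_def by simp
  have ne: "S \<noteq> {}" using W by auto
  have e1: "(\<Sum>z\<in>S. w z * L z) / W - \<mu> = (\<Sum>z\<in>S. (w z / W) * (L z - \<mu>))"
    using Wp by (simp add: W_def sum_divide_distrib[symmetric] right_diff_distrib sum_subtractf
        sum_distrib_right[symmetric] field_simps sum_distrib_left[symmetric])
  have "\<bar>(\<Sum>z\<in>S. w z * L z) / W - \<mu>\<bar> \<le> (\<Sum>z\<in>S. (w z / W) * \<bar>L z - \<mu>\<bar>)"
    unfolding e1 using w Wp by (auto intro!: order_trans[OF sum_abs] sum_mono simp: abs_mult)
  hence "\<Phi> \<bar>(\<Sum>z\<in>S. w z * L z) / W - \<mu>\<bar> \<le> \<Phi> (\<Sum>z\<in>S. (w z / W) * \<bar>L z - \<mu>\<bar>)"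
    using w Wp by (intro mono_onD[OF mono]) (auto intro!: sum_nonneg)
  also have "\<dots> \<le> (\<Sum>z\<in>S. (w z / W) * \<Phi> \<bar>L z - \<mu>\<bar>)"
    using convex_on_sum[OF S ne conv, of "\<lambda>z. w z / W" "\<lambda>z. \<bar>L z - \<mu>\<bar>"] w Wp
    by (auto simp: W_def sum_divide_distrib[symmetric])
  also have "\<dots> = (\<Sum>z\<in>S. w z * \<Phi> \<bar>L z - \<mu>\<bar>) / W"
    by (simp add: sum_divide_distrib)
  finally show ?thesis using Wp unfolding W_def[symmetric] by (simp add: field_simps)
qed
lemma expect_sum:
  fixes f :: "'z \<Rightarrow> real"
  assumes "finite Z" "set_pmf P \<subseteq> Z"
  shows "measure_pmf.expectation P f = (\<Sum>z\<in>Z. pmf P z * f z)"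
  using assms by (subst integral_measure_pmf_real[of Z]) (auto simp: mult.commute)

lemma prob_sum:
  assumes "finite Z" "set_pmf P \<subseteq> Z"
  shows "measure_pmf.prob P S = (\<Sum>z\<in>{z\<in>Z. z \<in> S}. pmf P z)"
proof -
  have "measure_pmf.prob P S = measure_pmf.prob P (S \<inter> set_pmf P)"
    by (simp add: measure_Int_set_pmf)
  also have "S \<inter> set_pmf P = {z\<in>Z. z \<in> S} \<inter> set_pmf P" using assms by auto
  also have "measure_pmf.prob P \<dots> = measure_pmf.prob P {z\<in>Z. z \<in> S}"
    by (simp add: measure_Int_set_pmf)
  also have "\<dots> = (\<Sum>z\<in>{z\<in>Z. z \<in> S}. pmf P z)"
    using assms by (simp add: measure_measure_pmf_finite)
  finally show ?thesis .
qed

lemma cond_expect_sum: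
  fixes f :: "'z \<Rightarrow> real"
  assumes Z: "finite Z" "set_pmf P \<subseteq> Z" and ne: "set_pmf P \<inter> S \<noteq> {}"
  shows "measure_pmf.expectation (cond_pmf P S) f
     = (\<Sum>z\<in>{z\<in>Z. z \<in> S}. pmf P z * f z) / measure_pmf.prob P S"
proof -
  have "set_pmf (cond_pmf P S) \<subseteq> Z" using Z ne by auto
  hence "measure_pmf.expectation (cond_pmf P S) f = (\<Sum>z\<in>Z. pmf (cond_pmf P S) z * f z)"
    using Z by (intro expect_sum) auto
  also have "\<dots> = (\<Sum>z\<in>Z. if z \<in> S then pmf P z * f z / measure_pmf.prob P S else 0)"
    using ne by (intro sum.cong) (auto simp: pmf_cond)
  also have "\<dots> = (\<Sum>z\<in>{z\<in>Z. z \<in> S}. pmf P z * f z / measure_pmf.prob P S)"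
    using Z by (simp add: sum.If_cases Int_def)
  also have "\<dots> = (\<Sum>z\<in>{z\<in>Z. z \<in> S}. pmf P z * f z) / measure_pmf.prob P S"
    by (simp add: sum_divide_distrib)
  finally show ?thesis .
qed

lemma bind_expect_sum:
  fixes L :: "'z \<Rightarrow> real" and M :: "'z pmf" and R :: "('z \<Rightarrow> 'z) pmf"
  assumes Z: "finite Z" "set_pmf M \<subseteq> Z" and Rm: "\<forall>r\<in>set_pmf R. r ` Z \<subseteq> Z"
  shows "measure_pmf.expectation (bind_pmf M (\<lambda>z. map_pmf (\<lambda>r. r z) R)) L
      = (\<Sum>x\<in>Z. pmf M x * measure_pmf.expectation R (\<lambda>r. L (r x)))"
proof -
  define N where "N = (\<lambda>z. map_pmf (\<lambda>r. r z) R)"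
  have NZ: "set_pmf (N x) \<subseteq> Z" if "x \<in> Z" for x
    using Rm that by (auto simp: N_def)
  have bZ: "set_pmf (bind_pmf M N) \<subseteq> Z" using Z NZ by auto
  have "measure_pmf.expectation (bind_pmf M N) L = (\<Sum>i\<in>Z. pmf (bind_pmf M N) i * L i)"
    by (rule expect_sum[OF Z(1) bZ])
  also have "\<dots> = (\<Sum>i\<in>Z. (\<Sum>x\<in>Z. pmf (N x) i * pmf M x) * L i)"
    using Z by (intro sum.cong refl arg_cong2[where f="(*)"]) (auto simp: pmf_bind intro!: integral_measure_pmf_real[of Z])
  also have "\<dots> = (\<Sum>i\<in>Z. \<Sum>x\<in>Z. pmf M x * (pmf (N x) i * L i))"
    by (simp add: sum_distrib_right sum_distrib_left mult_ac)
  also have "\<dots> = (\<Sum>x\<in>Z. \<Sum>i\<in>Z. pmf M x * (pmf (N x) i * L i))"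
    by (rule sum.swap)
  also have "\<dots> = (\<Sum>x\<in>Z. pmf M x * measure_pmf.expectation (N x) L)"
    using NZ by (intro sum.cong refl) (simp add: sum_distrib_left[symmetric] expect_sum[OF Z(1)])
  also have "\<dots> = (\<Sum>x\<in>Z. pmf M x * measure_pmf.expectation R (\<lambda>r. L (r x)))"
    by (simp add: N_def)
  finally show ?thesis by (simp add: N_def)
qed

lemma core:
  fixes P :: "'z pmf" and Z :: "'z set" and L :: "'z \<Rightarrow> real" and R :: "('z \<Rightarrow> 'z) pmf"
    and U :: "'z \<Rightarrow> int" and V :: "'z \<Rightarrow> 'v" and VV :: "'v set" and ub :: "'v \<Rightarrow> int"
    and m :: "'v \<Rightarrow> nat" and phi :: "'v \<Rightarrow> real" and \<Phi> :: "real \<Rightarrow> real"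
  assumes Z: "finite Z" "set_pmf P \<subseteq> Z"
    and Rmap: "\<forall>r\<in>set_pmf R. r ` Z \<subseteq> Z"
    and eps: "eps > 0"
    and A1: "measure_pmf.prob P {z. measure_pmf.expectation R (\<lambda>r. L (r z) - L z) \<ge> eps} \<ge> 1 - \<delta>"
    and A2: "\<forall>z\<in>Z. \<forall>r\<in>set_pmf R. L (r z) - L z \<ge> - A"
    and A3_V: "VV \<subseteq> set_pmf (map_pmf V P)"
    and A3_U: "\<forall>v\<in>VV. \<forall>u\<in>{ub v + 1 .. ub v + int (m v)}.
                 (u, v) \<in> set_pmf (map_pmf (\<lambda>z. (U z, V z)) P)"
    and A3: "\<forall>v\<in>VV. \<forall>u\<in>{ub v + 1 .. ub v + int (m v)}.
                 (u + 1, v) \<in> set_pmf (map_pmf (\<lambda>z. (U z, V z)) P) \<and>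
                 bind_pmf (cond_pmf P {z. U z = u \<and> V z = v})
                          (\<lambda>z. map_pmf (\<lambda>r. r z) R)
                   = cond_pmf P {z. U z = u + 1 \<and> V z = v}"
    and c: "c > 0"
    and A4: "\<forall>v\<in>VV. phi v > 0 \<and>
               (\<forall>u\<in>{ub v + 1 .. ub v + int (m v)}.
                  measure_pmf.prob P {z. U z = u \<and> V z = v}
                    / measure_pmf.prob P {z. V z = v} \<ge> phi v) \<and>
               real (m v) \<ge> c / phi v"
    and s: "s > 0" "s \<le> c / 2" "\<forall>v\<in>VV. phi v \<le> s"
    and Phi_convex: "convex_on {0..} \<Phi>"
    and Phi_mono: "mono_on {0..} \<Phi>"
    and Phi_nonneg: "\<forall>x\<ge>0. \<Phi> x \<ge> 0"
    and bo: "bo > 0" "measure_pmf.prob P {z. V z \<in> VV} \<ge> bo"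
    and Kd: "max 0 (eps + A) * \<delta> \<le> c * eps * bo / 16"
  shows "measure_pmf.expectation P (\<lambda>z. \<Phi> \<bar>L z - \<mu>\<bar>) \<ge> \<Phi> (eps * c / (16 * s)) * (bo * c / 8)"
proof -
  define w where "w = pmf P"
  define K where "K = max 0 (eps + A)"
  define T where "T = eps * c / (16 * s)"
  define G where "G = (\<lambda>z. measure_pmf.expectation R (\<lambda>r. L (r z)))"
  define D where "D = (\<lambda>z. measure_pmf.expectation R (\<lambda>r. L (r z) - L z))"
  define B where "B = {z. D z < eps}"
  define F where "F = (\<lambda>z. \<Phi> \<bar>L z - \<mu>\<bar>)"
  define pv where "pv = (\<lambda>v. measure_pmf.prob P {z. V z = v})"
  define Pb where "Pb = (\<lambda>v. \<Sum>z\<in>{z\<in>Z. V z = v \<and> z \<in> B}. w z)"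
  have K: "K \<ge> 0" "K \<ge> eps + A" by (auto simp: K_def)
  have T: "T \<ge> 0" using eps c s by (simp add: T_def)
  have wnn: "w z \<ge> 0" for z by (simp add: w_def)
  have Fnn: "F z \<ge> 0" for z using Phi_nonneg by (simp add: F_def)
  have PhiT: "\<Phi> T \<ge> 0" using Phi_nonneg T by simp
  have ps: "measure_pmf.prob P S = (\<Sum>z\<in>{z\<in>Z. z \<in> S}. w z)" for S
    unfolding w_def by (rule prob_sum[OF Z])
  have intL: "integrable (measure_pmf R) (\<lambda>r. L (r z))" if "z \<in> Z" for z
  proof (rule measure_pmf.integrable_const_bound[where B="\<Sum>y\<in>Z. \<bar>L y\<bar>"])
    show "AE r in measure_pmf R. norm (L (r z)) \<le> (\<Sum>y\<in>Z. \<bar>L y\<bar>)"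
      unfolding AE_measure_pmf_iff using Rmap that Z
      by (auto intro!: member_le_sum[where f="\<lambda>y. \<bar>L y\<bar>", simplified])
  qed simp
  have DG: "D z = G z - L z" if "z \<in> Z" for z
    unfolding D_def G_def using intL[OF that]
    by (subst Bochner_Integration.integral_diff) (auto simp: measure_pmf.prob_space)
  have DA: "D z \<ge> - A" if "z \<in> Z" for z
    unfolding D_def using intL[OF that] A2 that
    by (intro measure_pmf.integral_ge_const) (auto simp: AE_measure_pmf_iff)
  have Dlow: "D z \<ge> eps - K * (if z \<in> B then 1 else 0)" if "z \<in> Z" for z
    using DA[OF that] K by (auto simp: B_def)
  have PB: "(\<Sum>z\<in>{z\<in>Z. z \<in> B}. w z) \<le> \<delta>"
  proof -
    have "measure_pmf.prob P B = 1 - measure_pmf.prob P {z. D z \<ge> eps}"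
      using measure_pmf.prob_compl[of "{z. D z \<ge> eps}"]
      by (simp add: B_def Compl_eq_Diff_UNIV[symmetric] not_le Collect_neg_eq[symmetric])
    thus ?thesis using A1 ps[of B] unfolding D_def by linarith
  qed
  have VVfin: "finite VV"
  proof (rule finite_subset)
    show "VV \<subseteq> V ` Z" using A3_V Z by auto
  qed (use Z in auto)
  have perv: "(\<Sum>z\<in>{z\<in>Z. V z = v}. w z * F z) \<ge> (c/4) * pv v * \<Phi> T"
    if v: "v \<in> VV" and good: "K * Pb v \<le> (c * eps / 8) * pv v" for v
  proof -
    define Cs where "Cs = (\<lambda>j::nat. {z. U z = ub v + 1 + int j \<and> V z = v})"
    define \<pi> where "\<pi> = (\<lambda>j. measure_pmf.prob P (Cs j))"
    define \<alpha> where "\<alpha> = (\<lambda>j. (\<Sum>z\<in>{z\<in>Z. z \<in> Cs j}. w z * L z) / \<pi> j)"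
    define \<beta> where "\<beta> = (\<lambda>j. (\<Sum>z\<in>{z\<in>Z. z \<in> Cs j \<and> z \<in> B}. w z) / \<pi> j)"
    define k where "k = m v div 2"
    have phv: "phi v > 0" "real (m v) \<ge> c / phi v" "phi v \<le> s" using A4 v s by auto
    have pvpos: "pv v > 0"
    proof -
      obtain z where "z \<in> set_pmf P" "V z = v" using A3_V v by auto
      thus ?thesis unfolding pv_def by (intro measure_pmf_posI) auto
    qed
    have rng: "ub v + 1 + int j \<in> {ub v + 1 .. ub v + int (m v)}" if "j < m v" for j
      using that by auto
    have Cs_ne: "set_pmf P \<inter> Cs j \<noteq> {}" if "j \<le> m v" for j
    proof (cases "j = 0")
      case True
      hence "(ub v + 1 + int j, v) \<in> set_pmf (map_pmf (\<lambda>z. (U z, V z)) P)"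
        using A3_U v rng[of 0] that phv c
        by (metis (no_types, lifting) divide_pos_pos gr_zeroI of_nat_0 order_less_le_trans
            less_irrefl)
      thus ?thesis by (auto simp: Cs_def)
    next
      case False
      then obtain i where i: "j = Suc i" by (cases j) auto
      have "ub v + 1 + int i \<in> {ub v + 1 .. ub v + int (m v)}" using rng[of i] that i by simp
      hence "(ub v + 1 + int i + 1, v) \<in> set_pmf (map_pmf (\<lambda>z. (U z, V z)) P)"
        using A3 v by blast
      thus ?thesis using i by (auto simp: Cs_def add_ac)
    qed
    have \<pi>pos: "\<pi> j > 0" if "j \<le> m v" for j
      using Cs_ne[OF that] unfolding \<pi>_def by (auto intro: measure_pmf_posI)
    have \<pi>low: "\<pi> j \<ge> phi v * pv v" if "j < m v" for j
    proof -
      have "\<pi> j / pv v \<ge> phi v" using A4 v rng[OF that] by (auto simp: \<pi>_def pv_def Cs_def)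
      thus ?thesis using pvpos by (simp add: field_simps)
    qed
    have \<pi>sum: "\<pi> j = (\<Sum>z\<in>{z\<in>Z. z \<in> Cs j}. w z)" for j
      unfolding \<pi>_def by (rule ps)
    have step: "\<alpha> (Suc j) - \<alpha> j \<ge> eps - K * \<beta> j" if j: "j < m v" for j
    proof -
      have eq: "bind_pmf (cond_pmf P (Cs j)) (\<lambda>z. map_pmf (\<lambda>r. r z) R) = cond_pmf P (Cs (Suc j))"
        using A3 v rng[OF j] by (auto simp: Cs_def add_ac)
      have "\<alpha> (Suc j) = measure_pmf.expectation (cond_pmf P (Cs (Suc j))) L"
        unfolding \<alpha>_def \<pi>_def w_def using Cs_ne[of "Suc j"] j
        by (subst cond_expect_sum[OF Z]) auto
      also have "\<dots> = (\<Sum>x\<in>Z. pmf (cond_pmf P (Cs j)) x * G x)"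
        unfolding eq[symmetric] G_def using Z Cs_ne[of j] j
        by (intro bind_expect_sum Rmap) auto
      also have "\<dots> = measure_pmf.expectation (cond_pmf P (Cs j)) G"
        using Z Cs_ne[of j] j by (intro expect_sum[symmetric]) auto
      also have "\<dots> = (\<Sum>z\<in>{z\<in>Z. z \<in> Cs j}. w z * G z) / \<pi> j"
        unfolding \<pi>_def w_def using Cs_ne[of j] j by (subst cond_expect_sum[OF Z]) auto
      finally have a1: "\<alpha> (Suc j) = (\<Sum>z\<in>{z\<in>Z. z \<in> Cs j}. w z * G z) / \<pi> j" .
      have e1: "(\<Sum>z\<in>{z\<in>Z. z \<in> Cs j}. w z * G z)
          = (\<Sum>z\<in>{z\<in>Z. z \<in> Cs j}. w z * L z) + (\<Sum>z\<in>{z\<in>Z. z \<in> Cs j}. w z * D z)"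
        by (simp add: sum.distrib[symmetric] DG algebra_simps)
      have e2: "(\<Sum>z\<in>{z\<in>Z. z \<in> Cs j}. w z * D z)
          \<ge> (\<Sum>z\<in>{z\<in>Z. z \<in> Cs j}. w z * (eps - K * (if z \<in> B then 1 else 0)))"
        using Dlow wnn by (intro sum_mono mult_left_mono) auto
      have e3: "(\<Sum>z\<in>{z\<in>Z. z \<in> Cs j}. w z * (eps - K * (if z \<in> B then 1 else 0)))
          = eps * \<pi> j - K * (\<Sum>z\<in>{z\<in>Z. z \<in> Cs j \<and> z \<in> B}. w z)"
      proof -
        have "(\<Sum>z\<in>{z\<in>Z. z \<in> Cs j}. w z * (if z \<in> B then 1 else 0))
            = (\<Sum>z\<in>{z\<in>Z. z \<in> Cs j \<and> z \<in> B}. w z)"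
        (is ?hh) proof -
          have "(\<Sum>z\<in>{z\<in>Z. z \<in> Cs j}. w z * (if z \<in> B then 1 else 0))
              = (\<Sum>z\<in>{z\<in>Z. z \<in> Cs j}. if z \<in> B then w z else 0)" by (intro sum.cong) auto
          also have "\<dots> = (\<Sum>z\<in>{x\<in>{z\<in>Z. z \<in> Cs j}. x \<in> B}. w z)"
            by (rule sum.inter_filter[symmetric]) (simp add: Z)
          also have "{x\<in>{z\<in>Z. z \<in> Cs j}. x \<in> B} = {z\<in>Z. z \<in> Cs j \<and> z \<in> B}" by auto
          finally show ?thesis .
        qed
        have "(\<Sum>z\<in>{z\<in>Z. z \<in> Cs j}. w z * (eps - K * (if z \<in> B then 1 else 0)))
           = (\<Sum>z\<in>{z\<in>Z. z \<in> Cs j}. eps * w z - K * (w z * (if z \<in> B then 1 else 0)))"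
          by (intro sum.cong) (auto simp: algebra_simps)
        also have "\<dots> = eps * (\<Sum>z\<in>{z\<in>Z. z \<in> Cs j}. w z)
            - K * (\<Sum>z\<in>{z\<in>Z. z \<in> Cs j}. w z * (if z \<in> B then 1 else 0))"
          by (simp only: sum_subtractf sum_distrib_left)
        finally show ?thesis using \<open>?hh\<close> by (simp add: \<pi>sum)
      qed
      have "(\<Sum>z\<in>{z\<in>Z. z \<in> Cs j}. w z * G z)
          \<ge> (\<Sum>z\<in>{z\<in>Z. z \<in> Cs j}. w z * L z) + eps * \<pi> j - K * (\<Sum>z\<in>{z\<in>Z. z \<in> Cs j \<and> z \<in> B}. w z)"
        using e1 e2 e3 by linarith
      hence "(\<Sum>z\<in>{z\<in>Z. z \<in> Cs j}. w z * G z) / \<pi> j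
          \<ge> ((\<Sum>z\<in>{z\<in>Z. z \<in> Cs j}. w z * L z) + eps * \<pi> j - K * (\<Sum>z\<in>{z\<in>Z. z \<in> Cs j \<and> z \<in> B}. w z)) / \<pi> j"
        using \<pi>pos[of j] j by (intro divide_right_mono) auto
      also have "((\<Sum>z\<in>{z\<in>Z. z \<in> Cs j}. w z * L z) + eps * \<pi> j - K * (\<Sum>z\<in>{z\<in>Z. z \<in> Cs j \<and> z \<in> B}. w z)) / \<pi> j
          = \<alpha> j + eps - K * \<beta> j"
        using \<pi>pos[of j] j by (simp add: \<alpha>_def \<beta>_def field_simps)
      finally show ?thesis using a1 by linarith
    qed
    have \<beta>nn: "\<beta> j \<ge> 0" for j
      unfolding \<beta>_def \<pi>_def by (intro divide_nonneg_nonneg sum_nonneg) (auto simp: wnn)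
    have \<beta>le: "\<beta> j \<le> (\<Sum>z\<in>{z\<in>Z. z \<in> Cs j \<and> z \<in> B}. w z) / (phi v * pv v)" if "j < m v" for j
    proof -
      have q: "0 < phi v * pv v" using phv pvpos by simp
      hence "0 < \<pi> j" using \<pi>low[OF that] by linarith
      thus ?thesis unfolding \<beta>_def using \<pi>low[OF that] q
        by (intro divide_left_mono sum_nonneg) (auto simp: wnn)
    qed
    have fib: "(\<Sum>j<m v. \<Sum>z\<in>{z\<in>Z. z \<in> Cs j \<and> z \<in> B}. w z) \<le> Pb v"
    proof -
      have "(\<Sum>j<m v. \<Sum>z\<in>{z\<in>Z. z \<in> Cs j \<and> z \<in> B}. w z)
          = (\<Sum>j<m v. \<Sum>z\<in>{z\<in>{z\<in>Z. V z = v \<and> z \<in> B}. U z = ub v + 1 + int j}. w z)"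
        by (intro sum.cong refl arg_cong[where f="sum w"]) (auto simp: Cs_def)
      also have "\<dots> \<le> Pb v" unfolding Pb_def using Z
        by (intro fiber_sum) (auto simp: wnn inj_on_def)
      finally show ?thesis .
    qed
    have \<beta>sum: "(\<Sum>j<m v. \<beta> j) \<le> Pb v / (phi v * pv v)"
    proof -
      have "(\<Sum>j<m v. \<beta> j) \<le> (\<Sum>j<m v. (\<Sum>z\<in>{z\<in>Z. z \<in> Cs j \<and> z \<in> B}. w z) / (phi v * pv v))"
        using \<beta>le by (intro sum_mono) auto
      also have "\<dots> \<le> Pb v / (phi v * pv v)"
        using fib phv pvpos by (simp add: sum_divide_distrib[symmetric] divide_right_mono)
      finally show ?thesis .
    qed
    have mphi: "real (m v) * phi v \<ge> c" using phv by (simp add: field_simps)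
    have k2: "2 * real k \<ge> real (m v) - 1" unfolding k_def by linarith
    have big: "real k * eps - K * (\<Sum>j<m v. \<beta> j) \<ge> 2 * T"
    proof -
      define x where "x = 1 / phi v"
      define y where "y = 1 / s"
      have xy: "x \<ge> y" unfolding x_def y_def using phv by (simp add: frac_le)
      have y2: "c * y \<ge> 2" unfolding y_def using s by (simp add: field_simps)
      have mx: "real (m v) \<ge> c * x" using phv by (simp add: x_def)
      have "K * (\<Sum>j<m v. \<beta> j) \<le> K * (Pb v / (phi v * pv v))"
        using mult_left_mono[OF \<beta>sum K(1)] by simp
      also have "K * (Pb v / (phi v * pv v)) = (K * Pb v) / pv v * x"
        by (simp add: x_def)
      also have "\<dots> \<le> (c * eps / 8) * x"
      proof -
        have "(K * Pb v) / pv v \<le> c * eps / 8" using good pvpos by (simp add: divide_le_eq)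
        moreover have "x \<ge> 0" using phv by (simp add: x_def)
        ultimately show ?thesis using mult_right_mono by blast
      qed
      finally have kb: "K * (\<Sum>j<m v. \<beta> j) \<le> (c * eps / 8) * x" .
      have h1: "2 * (real k * eps) \<ge> real (m v) * eps - eps"
        using mult_right_mono[OF k2, of eps] eps by (simp add: algebra_simps)
      have h2: "real (m v) * eps \<ge> eps * c * x"
        using mult_right_mono[OF mx, of eps] eps by (simp add: algebra_simps)
      have h3: "2 * T = eps * c * y / 8" by (simp add: T_def y_def mult_ac)
      have h4: "eps * c * x \<ge> eps * c * y" using xy eps c by simp
      have h5: "eps * c * y \<ge> 2 * eps" using mult_left_mono[OF y2, of eps] eps by (simp add: mult_ac)
      have kb': "K * (\<Sum>j<m v. \<beta> j) \<le> eps * c * x / 8" using kb by (simp add: mult_ac)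
      show ?thesis using h1 h2 h3 h4 h5 kb' by linarith
    qed
    have pairs: "(\<Sum>j<m v. \<pi> j * \<Phi> \<bar>\<alpha> j - \<mu>\<bar>) \<ge> real k * (phi v * pv v) * \<Phi> T"
      using \<beta>nn \<pi>low phv pvpos step K big Phi_mono Phi_nonneg T
      by (intro pairs_lemma[where \<beta>=\<beta> and K=K and eps=eps]) (auto simp: k_def)
    have jen: "(\<Sum>z\<in>{z\<in>Z. z \<in> Cs j}. w z * F z) \<ge> \<pi> j * \<Phi> \<bar>\<alpha> j - \<mu>\<bar>" if "j < m v" for j
    proof -
      have "\<pi> j > 0" using \<pi>pos that by simp
      thus ?thesis unfolding F_def \<alpha>_def \<pi>sum using Z Phi_convex Phi_mono
        by (intro jensen_fin) (auto simp: wnn)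
    qed
    have "(\<Sum>z\<in>{z\<in>Z. V z = v}. w z * F z) \<ge> (\<Sum>j<m v. \<Sum>z\<in>{z\<in>Z. z \<in> Cs j}. w z * F z)"
    proof -
      have "(\<Sum>j<m v. \<Sum>z\<in>{z\<in>Z. z \<in> Cs j}. w z * F z)
          = (\<Sum>j<m v. \<Sum>z\<in>{z\<in>{z\<in>Z. V z = v}. U z = ub v + 1 + int j}. w z * F z)"
        by (intro sum.cong refl arg_cong[where f="sum _"]) (auto simp: Cs_def)
      also have "\<dots> \<le> (\<Sum>z\<in>{z\<in>Z. V z = v}. w z * F z)" using Z
        by (intro fiber_sum) (auto simp: wnn Fnn inj_on_def)
      finally show ?thesis .
    qed
    also have "(\<Sum>j<m v. \<Sum>z\<in>{z\<in>Z. z \<in> Cs j}. w z * F z) \<ge> (\<Sum>j<m v. \<pi> j * \<Phi> \<bar>\<alpha> j - \<mu>\<bar>)"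
      using jen by (intro sum_mono) auto
    also note pairs
    also have "real k * (phi v * pv v) * \<Phi> T \<ge> (c/4) * pv v * \<Phi> T"
    proof -
      have "real k * phi v \<ge> (real (m v) - 1) / 2 * phi v" using k2 phv by (simp add: mult_right_mono)
      hence "real k * phi v \<ge> c / 4" using mphi phv s by (simp add: algebra_simps) 
      hence "real k * phi v * (pv v * \<Phi> T) \<ge> c / 4 * (pv v * \<Phi> T)"
        using pvpos PhiT by (intro mult_right_mono) auto
      thus ?thesis by (simp add: mult_ac)
    qed
    finally show ?thesis .
  qed
  define Good where "Good = {v\<in>VV. K * Pb v \<le> (c * eps / 8) * pv v}"
  have GoodVV: "Good \<subseteq> VV" by (auto simp: Good_def)
  have Gfin: "finite Good" using VVfin GoodVV finite_subset by blast
  have pvsum: "pv v = (\<Sum>z\<in>{z\<in>Z. V z = v}. w z)" for v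
    unfolding pv_def by (simp add: ps)
  have pvnn: "pv v \<ge> 0" for v by (simp add: pv_def)
  have E: "measure_pmf.expectation P (\<lambda>z. \<Phi> \<bar>L z - \<mu>\<bar>) = (\<Sum>z\<in>Z. w z * F z)"
    unfolding w_def F_def by (rule expect_sum[OF Z])
  have "(\<Sum>z\<in>Z. w z * F z) \<ge> (\<Sum>v\<in>Good. \<Sum>z\<in>{z\<in>Z. V z = (\<lambda>v. v) v}. w z * F z)"
    using Z Gfin by (intro fiber_sum) (auto simp: wnn Fnn)
  also have "(\<Sum>v\<in>Good. \<Sum>z\<in>{z\<in>Z. V z = (\<lambda>v. v) v}. w z * F z) \<ge> (\<Sum>v\<in>Good. (c/4) * pv v * \<Phi> T)"
    using perv by (intro sum_mono) (auto simp: Good_def)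
  also have "(\<Sum>v\<in>Good. (c/4) * pv v * \<Phi> T) = (c/4) * \<Phi> T * (\<Sum>v\<in>Good. pv v)"
    by (simp add: sum_distrib_left mult_ac)
  finally have E1: "(\<Sum>z\<in>Z. w z * F z) \<ge> (c/4) * \<Phi> T * (\<Sum>v\<in>Good. pv v)" .
  have VVsum: "(\<Sum>v\<in>VV. pv v) \<ge> bo"
  proof -
    have "(\<Sum>v\<in>VV. pv v) = (\<Sum>v\<in>VV. \<Sum>z\<in>{z. z \<in> {z\<in>Z. V z \<in> VV} \<and> V z = v}. w z)"
      unfolding pvsum by (intro sum.cong refl arg_cong[where f="sum w"]) auto
    also have "\<dots> = (\<Sum>z\<in>{z\<in>Z. V z \<in> VV}. w z)"
      using Z VVfin by (intro sum.group) auto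
    also have "\<dots> = measure_pmf.prob P {z. V z \<in> VV}" by (simp add: ps)
    finally show ?thesis using bo by simp
  qed
  have Badsum: "(\<Sum>v\<in>VV - Good. pv v) \<le> bo / 2"
  proof -
    have "(\<Sum>v\<in>VV - Good. (c * eps / 8) * pv v) \<le> (\<Sum>v\<in>VV - Good. K * Pb v)"
      by (intro sum_mono) (auto simp: Good_def)
    also have "(\<Sum>v\<in>VV - Good. K * Pb v) = K * (\<Sum>v\<in>VV - Good. \<Sum>z\<in>{z\<in>{z\<in>Z. z \<in> B}. V z = (\<lambda>v. v) v}. w z)"
      unfolding Pb_def sum_distrib_left by (intro sum.cong refl arg_cong[where f="\<lambda>x. K * x"] arg_cong[where f="sum w"]) auto
    also have "\<dots> \<le> K * (\<Sum>z\<in>{z\<in>Z. z \<in> B}. w z)"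
      using K Z VVfin by (intro mult_left_mono fiber_sum) (auto simp: wnn)
    also have "\<dots> \<le> K * \<delta>" using K PB by (intro mult_left_mono) auto
    also have "\<dots> \<le> c * eps * bo / 16" using Kd by (simp add: K_def)
    finally have "(c * eps / 8) * (\<Sum>v\<in>VV - Good. pv v) \<le> (c * eps / 8) * (bo / 2)"
      by (simp add: sum_distrib_left)
    thus ?thesis using c eps by (simp add: mult_le_cancel_left_pos)
  qed
  have "(\<Sum>v\<in>VV. pv v) = (\<Sum>v\<in>VV - Good. pv v) + (\<Sum>v\<in>Good. pv v)"
    using sum.subset_diff[OF GoodVV VVfin] by simp
  hence Gsum: "(\<Sum>v\<in>Good. pv v) \<ge> bo / 2" using VVsum Badsum by linarith
  have "(c/4) * \<Phi> T * (\<Sum>v\<in>Good. pv v) \<ge> (c/4) * \<Phi> T * (bo / 2)"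
    using Gsum c PhiT by (intro mult_left_mono) auto
  thus ?thesis using E E1 by (simp add: T_def mult_ac)
qed

theorem theorem2p1:
  fixes PZ :: "nat \<Rightarrow> 'z pmf" and ZZ :: "nat \<Rightarrow> 'z set" and L :: "nat \<Rightarrow> 'z \<Rightarrow> real"
    and R :: "nat \<Rightarrow> ('z \<Rightarrow> 'z) pmf"
    and uf :: "nat \<Rightarrow> 'z \<Rightarrow> int" and vf :: "nat \<Rightarrow> 'z \<Rightarrow> int ^ 'd"
    and eps :: real and \<Delta> :: "nat \<Rightarrow> real" and A :: real
    and VV :: "nat \<Rightarrow> (int ^ 'd) set" and u0 :: "nat \<Rightarrow> int ^ 'd \<Rightarrow> int"
    and m :: "nat \<Rightarrow> int ^ 'd \<Rightarrow> nat"
    and n1 :: nat and c :: real and phi :: "nat \<Rightarrow> int ^ 'd \<Rightarrow> real"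
    and \<Phi> :: "real \<Rightarrow> real" and \<mu> :: "nat \<Rightarrow> real" and bo :: real
  assumes finZ: "\<forall>n. finite (ZZ n) \<and> set_pmf (PZ n) \<subseteq> ZZ n"
    and Rmap: "\<forall>n. \<forall>r\<in>set_pmf (R n). r ` ZZ n \<subseteq> ZZ n"
    and A1_eps: "eps > 0"
    and A1_Delta: "\<Delta> \<longlonglongrightarrow> 0"
    and A1: "\<forall>n. measure_pmf.prob (PZ n)
               {z. measure_pmf.expectation (R n) (\<lambda>r. L n (r z) - L n z) \<ge> eps} \<ge> 1 - \<Delta> n"
    and A2: "\<forall>n. \<forall>z\<in>ZZ n. \<forall>r\<in>set_pmf (R n). L n (r z) - L n z \<ge> - A"
    and A3_V: "\<forall>n. VV n \<subseteq> set_pmf (map_pmf (vf n) (PZ n))"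
    and A3_U: "\<forall>n. \<forall>v\<in>VV n. \<forall>u\<in>{u0 n v + 1 .. u0 n v + int (m n v)}.
                 (u, v) \<in> set_pmf (map_pmf (\<lambda>z. (uf n z, vf n z)) (PZ n))"
    and A3: "\<forall>n. \<forall>v\<in>VV n. \<forall>u\<in>{u0 n v + 1 .. u0 n v + int (m n v)}.
                 (u + 1, v) \<in> set_pmf (map_pmf (\<lambda>z. (uf n z, vf n z)) (PZ n)) \<and>
                 bind_pmf (cond_pmf (PZ n) {z. uf n z = u \<and> vf n z = v})
                          (\<lambda>z. map_pmf (\<lambda>r. r z) (R n))
                   = cond_pmf (PZ n) {z. uf n z = u + 1 \<and> vf n z = v}"
    and A4_c: "c > 0"
    and A4: "\<forall>n\<ge>n1. \<forall>v\<in>VV n. phi n v > 0 \<and>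
               (\<forall>u\<in>{u0 n v + 1 .. u0 n v + int (m n v)}.
                  measure_pmf.prob (PZ n) {z. uf n z = u \<and> vf n z = v}
                    / measure_pmf.prob (PZ n) {z. vf n z = v} \<ge> phi n v) \<and>
               real (m n v) \<ge> c / phi n v"
    and phi_lim: "(\<lambda>n. SUP v\<in>VV n. phi n v) \<longlonglongrightarrow> 0"
    and Phi_convex: "convex_on {0..} \<Phi>"
    and Phi_mono: "mono_on {0..} \<Phi>"
    and Phi_nonneg: "\<forall>x\<ge>0. \<Phi> x \<ge> 0"
    and bo_pos: "bo > 0"
    and bo: "eventually (\<lambda>n. measure_pmf.prob (PZ n) {z. vf n z \<in> VV n} \<ge> bo) sequentially"
  shows "\<forall>co. 0 < co \<and> co < bo * c / 8 \<longrightarrow>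
           eventually (\<lambda>n. measure_pmf.expectation (PZ n) (\<lambda>z. \<Phi> \<bar>L n z - \<mu> n\<bar>)
              \<ge> \<Phi> (eps * c / (16 * (SUP v\<in>VV n. phi n v))) * co) sequentially"
proof (intro allI impI)
  fix co assume co: "0 < co \<and> co < bo * c / 8"
  define K where "K = max 0 (eps + A)"
  define d where "d = c * eps * bo / 16 / (K + 1)"
  have K: "K \<ge> 0" by (simp add: K_def)
  have d: "d > 0" using A4_c A1_eps bo_pos K by (simp add: d_def)
  have ev1: "eventually (\<lambda>n. n \<ge> n1) sequentially" by (rule eventually_ge_at_top)
  have ev2: "eventually (\<lambda>n. (SUP v\<in>VV n. phi n v) < c / 2) sequentially"
    using order_tendstoD(2)[OF phi_lim, of "c/2"] A4_c by simp
  have ev3: "eventually (\<lambda>n. \<Delta> n < d) sequentially"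
    using order_tendstoD(2)[OF A1_Delta d] .
  show "eventually (\<lambda>n. measure_pmf.expectation (PZ n) (\<lambda>z. \<Phi> \<bar>L n z - \<mu> n\<bar>)
              \<ge> \<Phi> (eps * c / (16 * (SUP v\<in>VV n. phi n v))) * co) sequentially"
    using ev1 ev2 ev3 bo
  proof eventually_elim
    case (elim n)
    define s where "s = (SUP v\<in>VV n. phi n v)"
    have VVfin: "finite (VV n)"
    proof (rule finite_subset)
      have "set_pmf (PZ n) \<subseteq> ZZ n" using finZ by auto
      thus "VV n \<subseteq> vf n ` ZZ n" using A3_V by fastforce
    qed (use finZ in auto)
    have "VV n \<noteq> {}"
    proof
      assume "VV n = {}"
      hence "measure_pmf.prob (PZ n) {z. vf n z \<in> VV n} = 0" by simp
      thus False using elim(4) bo_pos by simp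
    qed
    then obtain v0 where v0: "v0 \<in> VV n" by blast
    have le: "phi n v \<le> s" if "v \<in> VV n" for v
      unfolding s_def using VVfin that by (intro cSUP_upper) auto
    have spos: "s > 0" using le[OF v0] A4 elim(1) v0 by force
    have Kd: "max 0 (eps + A) * \<Delta> n \<le> c * eps * bo / 16"
    proof -
      have "K * \<Delta> n \<le> K * d" using K elim(3) by (intro mult_left_mono) auto
      also have "\<dots> \<le> (K + 1) * d" using d by simp
      also have "\<dots> = c * eps * bo / 16" using K by (simp add: d_def field_simps)
      finally show ?thesis by (simp add: K_def)
    qed
    have core: "measure_pmf.expectation (PZ n) (\<lambda>z. \<Phi> \<bar>L n z - \<mu> n\<bar>)
        \<ge> \<Phi> (eps * c / (16 * s)) * (bo * c / 8)"
      using finZ Rmap A1_eps A1 A2 A3_V A3_U A3 A4_c A4 elim(1) spos elim(2) le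
        Phi_convex Phi_mono Phi_nonneg bo_pos elim(4) Kd
      unfolding s_def
      by (intro core[where P="PZ n" and Z="ZZ n" and R="R n" and U="uf n" and V="vf n"
            and VV="VV n" and ub="u0 n" and m="m n" and phi="phi n" and \<delta>="\<Delta> n" and A=A])
         (auto simp: s_def)
    have "\<Phi> (eps * c / (16 * s)) \<ge> 0" using Phi_nonneg A1_eps A4_c spos by simp
    hence "\<Phi> (eps * c / (16 * s)) * (bo * c / 8) \<ge> \<Phi> (eps * c / (16 * s)) * co"
      using co by (intro mult_left_mono) auto
    thus ?case using core by (simp add: s_def)
  qed
qed
end
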